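(* Let $M\ge 2$ and define $$\mathcal{B}=\Big\{(n_1,\dots,n_M,P_1,\dots,P_M)\in\mathbb{R}_{>0}^{2M}\;:\;0.5>\varepsilon_1(n_1,P_1)>\varepsilon_M(n_1,\dots,n_M,P_1,\dots,P_M)>Q\big(\sqrt{2B\ln 2}/3\big)\Big\}.$$ Fix $(n_1,\dots,n_M,P_1,\dots,P_M)\in\mathbb{R}_{>0}^{2M}$. Then on any interval of values $a>0$ for which $(an_1,n_2,\dots,n_M,P_1/a,P_2,\dots,P_M)\in\mathcal{B}$, both functions $a\mapsto\varepsilon_1(an_1,P_1/a)$ and $a\mapsto\varepsilon_M(an_1,n_2,\dots,n_M,P_1/a,P_2,\dots,P_M)$ are non-increasing in $a$.
   Context: Fix $B>0$. Let $Q(x)=\frac{1}{\sqrt{2\pi}}\int_x^\infty e^{-t^2/2}\,dt$. For $m\ge 1$, blocklengths $\vec n_m=(n_1,\dots,n_m)$ with $n_i>0$ and powers $\vec P_m=(P_1,\dots,P_m)$ with $P_i\ge 0$ (not all zero), define $$\varepsilon_m(\vec n_m,\vec P_m)=Q\!\left(\frac{\sum_{i=1}^m n_i\ln(1+P_i)-B\ln 2}{\sqrt{\sum_{i=1}^m \frac{n_iP_i(P_i+2)}{(P_i+1)^2}}}\right),$$ written also as $\varepsilon_m(n_1,\dots,n_m,P_1,\dots,P_m)$. *)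

theory Defs
  imports "HOL-Analysis.Analysis"
begin

definition Qfun :: "real \<Rightarrow> real" where
  "Qfun x = integral {x..} (\<lambda>t. exp (- (t ^ 2) / 2) / sqrt (2 * pi))"

definition eps :: "real \<Rightarrow> nat \<Rightarrow> (nat \<Rightarrow> real) \<Rightarrow> (nat \<Rightarrow> real) \<Rightarrow> real" where
  "eps B m n P = Qfun (((\<Sum>i=1..m. n i * ln (1 + P i)) - B * ln 2)
                 / sqrt (\<Sum>i=1..m. n i * P i * (P i + 2) / (P i + 1) ^ 2))"

definition inB :: "real \<Rightarrow> nat \<Rightarrow> (nat \<Rightarrow> real) \<Rightarrow> (nat \<Rightarrow> real) \<Rightarrow> bool" where
  "inB B M n P \<longleftrightarrow> (\<forall>i\<in>{1..M}. n i > 0 \<and> P i > 0) \<and>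
     0.5 > eps B 1 n P \<and> eps B 1 n P > eps B M n P \<and>
     eps B M n P > Qfun (sqrt (2 * B * ln 2) / 3)"

end

theory Submission
  imports Defs "HOL-Probability.Distributions"
begin

lemma Qfun_eq: "Qfun x = (\<integral>t. indicator {x..} t *\<^sub>R std_normal_density t \<partial>lborel)"
proof -
  have si: "set_integrable lborel {x..} std_normal_density"
    unfolding set_integrable_def by (intro integrable_mult_indicator) auto
  have "(\<lambda>t. exp (- (t ^ 2) / 2) / sqrt (2 * pi)) = std_normal_density"
    by (auto simp: std_normal_density_def)
  then show ?thesis
    using set_borel_integral_eq_integral(2)[OF si]
    unfolding Qfun_def set_lebesgue_integral_def by simp
qed

lemma Qfun_antimono: "x \<le> y \<Longrightarrow> Qfun y \<le> Qfun x"
  unfolding Qfun_eq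
  by (intro integral_mono integrable_mult_indicator) (auto split: split_indicator)

lemma Qfun_0: "Qfun 0 \<ge> 1/2"
proof -
  let ?g = std_normal_density
  have i1: "integrable lborel (\<lambda>t. indicator {0..} t *\<^sub>R ?g t)"
    by (intro integrable_mult_indicator) auto
  have i2: "integrable lborel (\<lambda>t. indicator {..<0} t *\<^sub>R ?g t)"
    by (intro integrable_mult_indicator) auto
  have i3: "integrable lborel (\<lambda>t. indicator {0<..} t *\<^sub>R ?g t)"
    by (intro integrable_mult_indicator) auto
  have "1 = (\<integral>t. ?g t \<partial>lborel)" by simp
  also have "\<dots> = (\<integral>t. indicator {0..} t *\<^sub>R ?g t + indicator {..<0} t *\<^sub>R ?g t \<partial>lborel)"
    by (intro Bochner_Integration.integral_cong) (auto split: split_indicator)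
  also have "\<dots> = (\<integral>t. indicator {0..} t *\<^sub>R ?g t \<partial>lborel) + (\<integral>t. indicator {..<0} t *\<^sub>R ?g t \<partial>lborel)"
    using i1 i2 by simp
  also have "(\<integral>t. indicator {..<0} t *\<^sub>R ?g t \<partial>lborel) = (\<integral>t. indicator {0<..} t *\<^sub>R ?g t \<partial>lborel)"
    by (subst lborel_integral_real_affine[where c="-1" and t=0])
       (auto intro!: Bochner_Integration.integral_cong split: split_indicator simp: std_normal_density_def)
  also have "\<dots> \<le> (\<integral>t. indicator {0..} t *\<^sub>R ?g t \<partial>lborel)"
    using i1 i3 by (intro integral_mono) (auto split: split_indicator)
  finally show ?thesis unfolding Qfun_eq by simp
qed

lemma log_ineq3:
  fixes w :: real assumes w: "0 \<le> w" "w < 1"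
  shows "w + w^2/2 \<le> - ln (1-w)"
proof -
  let ?f = "\<lambda>v::real. - ln (1-v) - v - v^2/2"
  have "?f 0 \<le> ?f w"
  proof (rule DERIV_nonneg_imp_nondecreasing[OF w(1)])
    fix v :: real assume v: "0 \<le> v" "v \<le> w"
    have v1: "v < 1" using v w by simp
    have "(?f has_real_derivative (1/(1-v) - 1 - v)) (at v)"
      using v1
      apply (intro derivative_eq_intros)
      apply (auto simp del: power2_eq_square)
      done
    moreover have "0 \<le> 1/(1-v) - 1 - v"
    proof -
      have "(1+v)*(1-v) \<le> 1" by (simp add: algebra_simps)
      then have "1+v \<le> 1/(1-v)" using v1 by (simp add: pos_le_divide_eq)
      then show ?thesis by simp
    qed
    ultimately show "\<exists>y. (?f has_real_derivative y) (at v) \<and> 0 \<le> y" by blast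
  qed
  then show ?thesis by simp
qed

lemma core2:
  fixes w L :: real
  assumes w: "0 < w" "w < 1" and h: "w + w^2/2 \<le> L"
  shows "L*w^3*(3-2*w)^2 \<le> 18*(L-w)^2*(2-w)"
proof -
  define D where "D = L - w"
  define D0 where "D0 = w^2/2"
  define k where "k = (3-2*w)^2"
  have DD0: "D0 \<le> D" using h by (simp add: D_def D0_def)
  have k9: "k \<le> 9" unfolding k_def using w by (simp add: power2_eq_square algebra_simps)
  have k0: "0 \<le> k" by (simp add: k_def)
  have w3: "w^3 \<le> w^2" using w by (simp add: power3_eq_cube power2_eq_square mult_le_cancel_left1)
  have "w^3*k \<le> w^2 * 9" using w3 k9 k0 w by (intro mult_mono) auto
  also have "\<dots> \<le> 18*(2-w)*(D+D0)"
  proof -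
    have "w^2 \<le> D + D0" using DD0 by (simp add: D0_def)
    then have "18*w^2 \<le> 18*(D+D0)" by simp
    also have "\<dots> \<le> 18*(2-w)*(D+D0)"
    proof (rule mult_right_mono)
      show "18 \<le> 18*(2-w)" using w by simp
      show "0 \<le> D+D0" using DD0 zero_le_power2[of w] unfolding D0_def by linarith
    qed
    finally have e: "18*w^2 \<le> 18*(2-w)*(D+D0)" .
    show ?thesis using e zero_le_power2[of w] by linarith
  qed
  finally have f: "0 \<le> 18*(2-w)*(D+D0) - w^3*k" by simp
  have q0: "0 \<le> 18*(2-w)*D0^2 - (w+D0)*w^3*k"
  proof -
    have "18*(2-w)*D0^2 - (w+D0)*w^3*k = w^4*(w*(3+2*w-2*w^2))"
      unfolding D0_def k_def by (simp add: power2_eq_square power3_eq_cube algebra_simps numeral_eq_Suc)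
    moreover have "0 \<le> w*(3+2*w-2*w^2)"
    proof -
      have "w^2 \<le> 1" using w by (intro power_le_one) auto
      then show ?thesis using w by simp
    qed
    ultimately show ?thesis using w by simp
  qed
  have "(18*(2-w)*D^2 - (w+D)*w^3*k) - (18*(2-w)*D0^2 - (w+D0)*w^3*k)
        = (D-D0)*(18*(2-w)*(D+D0) - w^3*k)"
    by (simp add: power2_eq_square algebra_simps)
  moreover have "0 \<le> (D-D0)*(18*(2-w)*(D+D0) - w^3*k)" using DD0 f by simp
  ultimately have "0 \<le> 18*(2-w)*D^2 - (w+D)*w^3*k" using q0 by linarith
  then show ?thesis unfolding D_def k_def by (simp add: algebra_simps)
qed

lemma key_pt:
  fixes n1 x a \<beta> RS RV H G V N H' G' :: real
  assumes n1: "n1 > 0" and x: "x > 0" and a: "a > 0" and RV: "RV \<ge> 0" and b: "\<beta> > 0"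
    and H: "H = a*n1*ln(1+x/a)" and G: "G = n1*x*a*(x+2*a)/(x+a)^2"
    and V: "V = G + RV" and N: "N = H + RS - \<beta>"
    and H': "H' = n1*(ln(1+x/a) - x/(a+x))" and G': "G' = n1*x^2*(x+3*a)/(x+a)^3"
    and hb: "\<beta> < H" and hf: "N / sqrt V < sqrt(2*\<beta>)/3"
  shows "0 \<le> H' * sqrt V - N * (G' * (inverse (sqrt V)/2))"
proof -
  define u where "u = x/a"
  define w where "w = x/(x+a)"
  define L where "L = ln(1+u)"
  have u: "u > 0" using x a by (simp add: u_def)
  have w: "0 < w" "w < 1" using x a by (auto simp: w_def)
  have wu: "w = u/(1+u)" using x a by (simp add: w_def u_def field_simps)
  have u1: "1 + u \<noteq> 0" using u by simp
  have "1 - w = 1/(1+u)" using u1 unfolding wu by (simp add: field_simps)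
  then have "- ln (1-w) = L" using u by (simp add: L_def ln_div)
  then have h1: "w + w^2/2 \<le> L" using log_ineq3[of w] w by simp
  have "0 \<le> w^2/2" by simp
  then have Lw: "w \<le> L" using h1 by linarith
  have c: "L*w^3*(3-2*w)^2 \<le> 18*(L-w)^2*(2-w)" using core2[OF w h1] .
  have HL: "H = n1*a*L" using H by (simp add: L_def u_def)
  have GL: "G = n1*a*(w*(2-w))" using G x a by (simp add: w_def field_simps power2_eq_square)
  have G'L: "G' = n1*(w^2*(3-2*w))" using G' x a by (simp add: w_def power_divide field_simps power2_eq_square power3_eq_cube)
  have H'L: "H' = n1*(L-w)" using H' x a by (simp add: w_def L_def u_def add.commute)
  have Gpos: "0 < G" unfolding GL using n1 a w by auto
  have Vpos: "0 < V" using Gpos RV V by simp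
  have G'pos: "0 \<le> G'" unfolding G'L using n1 w by (intro mult_nonneg_nonneg) auto
  have H'pos: "0 \<le> H'" unfolding H'L using n1 Lw by auto
  have key: "H*G'^2 \<le> 18*H'^2*G"
  proof -
    have "H*G'^2 = (n1^3*a*w)*(L*w^3*(3-2*w)^2)"
      unfolding HL G'L by (simp add: power_mult_distrib algebra_simps power2_eq_square numeral_eq_Suc)
    also have "\<dots> \<le> (n1^3*a*w)*(18*(L-w)^2*(2-w))"
      using c n1 a w by (intro mult_left_mono) auto
    also have "\<dots> = 18*H'^2*G"
      unfolding GL H'L by (simp add: power_mult_distrib algebra_simps power2_eq_square numeral_eq_Suc)
    finally show ?thesis .
  qed
  define cc where "cc = sqrt(2*\<beta>)/3"
  have cc0: "0 \<le> cc" using b by (simp add: cc_def)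
  have cc2: "cc^2 = 2*\<beta>/9" using b by (simp add: cc_def power_divide)
  have G'2: "0 \<le> G'^2" by simp
  have st1: "(cc*G'/2)^2 = cc^2*G'^2/4" by (simp add: power_mult_distrib power_divide)
  have st2: "cc^2*G'^2/4 \<le> (2*H/9)*G'^2/4"
    unfolding cc2 using hb G'2 by (intro divide_right_mono mult_right_mono) auto
  have st3: "(2*H/9)*G'^2/4 \<le> H'^2*G" using key by linarith
  have st4: "H'^2*G = (H' * sqrt G)^2" using Gpos by (simp add: power_mult_distrib)
  have sq: "(cc*G'/2)^2 \<le> (H' * sqrt G)^2" using st1 st2 st3 st4 by linarith
  have sG: "0 \<le> H' * sqrt G" using H'pos Gpos by simp
  have s0: "cc*G'/2 \<le> H' * sqrt G" by (rule power2_le_imp_le[OF sq sG])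
  have GV: "sqrt G \<le> sqrt V" using V RV by simp
  have s1: "cc*G'/2 \<le> H' * sqrt V" using s0 mult_left_mono[OF GV H'pos] by linarith
  have sV: "0 < sqrt V" using Vpos by simp
  have hf': "N / sqrt V < cc" using hf by (simp only: cc_def)
  have Nc: "N \<le> cc * sqrt V" using hf' pos_divide_less_eq[OF sV, of N cc] by simp
  have sV0: "sqrt V \<noteq> 0" using sV by simp
  have t1: "N * (G' * (inverse (sqrt V)/2)) = (N*G')/(2 * sqrt V)" using sV0 by (simp add: field_simps)
  have t2: "(N*G')/(2 * sqrt V) \<le> (cc * sqrt V*G')/(2 * sqrt V)"
    using sV by (intro divide_right_mono[OF mult_right_mono[OF Nc G'pos]]) simp
  have t3: "(cc * sqrt V*G')/(2 * sqrt V) = cc*G'/2" using sV0 by (simp add: field_simps)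
  show ?thesis using s1 t1 t2 t3 by linarith
qed

lemma dH:
  fixes n1 x t :: real assumes x: "x > 0" and t: "t > 0"
  shows "((\<lambda>t. t*n1*ln(1+x/t)) has_real_derivative n1*(ln(1+x/t) - x/(t+x))) (at t)"
proof -
  have "((\<lambda>t. t*n1*ln(1+x/t)) has_real_derivative (1*n1*ln(1+x/t) + t*n1*((-(x/t^2))/(1+x/t)))) (at t)"
    using x t
    apply (intro derivative_eq_intros)
    apply (auto simp del: power2_eq_square)
    subgoal by (simp add: add_pos_pos)
    subgoal by (simp add: power2_eq_square)
    done
  moreover have "1*n1*ln(1+x/t) + t*n1*((-(x/t^2))/(1+x/t)) = n1*(ln(1+x/t) - x/(t+x))"
  proof -
    have tx: "t + x \<noteq> 0" "t \<noteq> 0" using x t by auto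
    have A: "t*(1+x/t) = t+x" using tx by (simp add: algebra_simps)
    have "t*((x/t^2)/(1+x/t)) = (x/t)/(1+x/t)" using tx by (simp add: power2_eq_square)
    also have "\<dots> = x/(t*(1+x/t))" by simp
    also have "\<dots> = x/(t+x)" by (simp only: A)
    finally have B: "t*((x/t^2)/(1+x/t)) = x/(t+x)" .
    have "t*n1*((-(x/t^2))/(1+x/t)) = - n1 * (t*((x/t^2)/(1+x/t)))" by (simp add: ac_simps)
    also have "\<dots> = - n1 * (x/(t+x))" by (simp only: B)
    finally have C: "t*n1*((-(x/t^2))/(1+x/t)) = - n1 * (x/(t+x))" .
    show ?thesis unfolding C by (simp add: right_diff_distrib)
  qed
  ultimately show ?thesis by simp
qed

lemma dG:
  fixes n1 x t :: real assumes x: "x > 0" and t: "t > 0"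
  shows "((\<lambda>t. n1*x*t*(x+2*t)/(x+t)^2) has_real_derivative n1*x^2*(x+3*t)/(x+t)^3) (at t)"
proof -
  have "((\<lambda>t. n1*x*t*(x+2*t)/(x+t)^2) has_real_derivative
     ((n1*x*1*(x+2*t) + n1*x*t*2)*(x+t)^2 - n1*x*t*(x+2*t)*(2*(x+t)))/((x+t)^2*(x+t)^2)) (at t)"
    using x t by (auto intro!: derivative_eq_intros simp: power2_eq_square)
  moreover have "((n1*x*1*(x+2*t) + n1*x*t*2)*(x+t)^2 - n1*x*t*(x+2*t)*(2*(x+t)))/((x+t)^2*(x+t)^2) = n1*x^2*(x+3*t)/(x+t)^3"
  proof -
    have s: "x + t \<noteq> 0" using x t by auto
    have "(n1*x*1*(x+2*t) + n1*x*t*2)*(x+t)^2 - n1*x*t*(x+2*t)*(2*(x+t)) = (n1*x^2*(x+3*t))*(x+t)"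
      by (simp add: power2_eq_square algebra_simps)
    moreover have "(x+t)^2*(x+t)^2 = (x+t)^3 * (x+t)" by (simp add: power2_eq_square power3_eq_cube)
    ultimately show ?thesis using s by simp
  qed
  ultimately show ?thesis by simp
qed

lemma F_mono:
  fixes n1 x \<beta> RS RV a b :: real and I :: "real set"
  assumes n1: "n1 > 0" and x: "x > 0" and b0: "\<beta> > 0" and RV: "RV \<ge> 0"
    and I: "is_interval I" "I \<subseteq> {0<..}"
    and hI: "\<forall>t\<in>I. \<beta> < t*n1*ln(1+x/t) \<and>
       (t*n1*ln(1+x/t) + RS - \<beta>)/sqrt(n1*x*t*(x+2*t)/(x+t)^2 + RV) < sqrt(2*\<beta>)/3"
    and ab: "a \<in> I" "b \<in> I" "a \<le> b"
  shows "(a*n1*ln(1+x/a) + RS - \<beta>)/sqrt(n1*x*a*(x+2*a)/(x+a)^2 + RV)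
       \<le> (b*n1*ln(1+x/b) + RS - \<beta>)/sqrt(n1*x*b*(x+2*b)/(x+b)^2 + RV)"
proof -
  let ?F = "\<lambda>t. (t*n1*ln(1+x/t) + RS - \<beta>)/sqrt(n1*x*t*(x+2*t)/(x+t)^2 + RV)"
  have "?F a \<le> ?F b"
  proof (rule DERIV_nonneg_imp_nondecreasing[OF ab(3)])
    fix t assume t: "a \<le> t" "t \<le> b"
    have tI: "t \<in> I" using I(1) ab t unfolding is_interval_1 by blast
    have t0: "t > 0" using tI I(2) by auto
    define H where "H = t*n1*ln(1+x/t)"
    define G where "G = n1*x*t*(x+2*t)/(x+t)^2"
    define V where "V = G + RV"
    define N where "N = H + RS - \<beta>"
    define H' where "H' = n1*(ln(1+x/t) - x/(t+x))"
    define G' where "G' = n1*x^2*(x+3*t)/(x+t)^3"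
    have Gpos: "0 < G" unfolding G_def using n1 x t0 by simp
    have Vpos: "0 < V" using Gpos RV by (simp add: V_def)
    have dN: "((\<lambda>t. t*n1*ln(1+x/t) + RS - \<beta>) has_real_derivative H' + 0 - 0) (at t)"
      unfolding H'_def
      by (rule Deriv.field_differentiable_diff[OF Deriv.field_differentiable_add[OF dH[OF x t0] DERIV_const] DERIV_const])
    have dV: "((\<lambda>t. n1*x*t*(x+2*t)/(x+t)^2 + RV) has_real_derivative G' + 0) (at t)"
      unfolding G'_def
      by (rule Deriv.field_differentiable_add[OF dG[OF x t0] DERIV_const])
    have dS: "((\<lambda>t. sqrt (n1*x*t*(x+2*t)/(x+t)^2 + RV)) has_real_derivative inverse (sqrt V)/2 * (G' + 0)) (at t)"
      using DERIV_chain2[OF DERIV_real_sqrt dV] Vpos by (simp add: V_def G_def)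
    have sV: "sqrt (n1*x*t*(x+2*t)/(x+t)^2 + RV) \<noteq> 0" using Vpos by (simp add: V_def G_def)
    have dF: "(?F has_real_derivative
        ((H' + 0 - 0) * sqrt V - N * (inverse (sqrt V)/2 * (G' + 0))) / (sqrt V * sqrt V)) (at t)"
      using DERIV_divide[OF dN dS sV] by (simp add: N_def H_def V_def G_def)
    have kp: "0 \<le> H' * sqrt V - N * (G' * (inverse (sqrt V)/2))"
      using hI tI
      by (intro key_pt[OF n1 x t0 RV b0 H_def G_def V_def N_def _ G'_def])
         (auto simp: H_def H'_def N_def V_def G_def add.commute)
    have "0 \<le> ((H' + 0 - 0) * sqrt V - N * (inverse (sqrt V)/2 * (G' + 0))) / (sqrt V * sqrt V)"
      using kp by (simp add: mult.commute)
    then show "\<exists>y. (?F has_real_derivative y) (at t) \<and> 0 \<le> y" using dF by blast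
  qed
  then show ?thesis by simp
qed


lemma eps_split:
  fixes B a :: real and m :: nat and n P :: "nat \<Rightarrow> real"
  assumes m: "1 \<le> m" and a: "a > 0" and P1: "P 1 > 0"
  shows "eps B m (n(1 := a * n 1)) (P(1 := P 1 / a)) =
    Qfun ((a*n 1*ln(1+P 1/a) + (\<Sum>i=2..m. n i * ln (1 + P i)) - B*ln 2) /
      sqrt (n 1*P 1*a*(P 1+2*a)/(P 1+a)^2 + (\<Sum>i=2..m. n i * P i * (P i + 2) / (P i + 1) ^ 2)))"
proof -
  have s1: "(\<Sum>i=1..m. (n(1 := a * n 1)) i * ln (1 + (P(1 := P 1 / a)) i))
      = a*n 1*ln(1+P 1/a) + (\<Sum>i=2..m. n i * ln (1 + P i))"
    using m by (simp add: sum.atLeast_Suc_atMost numeral_2_eq_2)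
  have s2: "(\<Sum>i=1..m. (n(1 := a * n 1)) i * (P(1 := P 1 / a)) i * ((P(1 := P 1 / a)) i + 2) / ((P(1 := P 1 / a)) i + 1) ^ 2)
      = (a*n 1)*(P 1/a)*(P 1/a+2)/(P 1/a+1)^2 + (\<Sum>i=2..m. n i * P i * (P i + 2) / (P i + 1) ^ 2)"
    using m by (simp add: sum.atLeast_Suc_atMost numeral_2_eq_2)
  have e: "(a*n 1)*(P 1/a)*(P 1/a+2)/(P 1/a+1)^2 = n 1*P 1*a*(P 1+2*a)/(P 1+a)^2"
  proof -
    have h1: "P 1/a+2 = (P 1+2*a)/a" and h2: "P 1/a+1 = (P 1+a)/a" using a by (simp_all add: field_simps)
    have "(a*n 1)*(P 1/a)*(P 1/a+2)/(P 1/a+1)^2 = (n 1*P 1)*((P 1+2*a)/a)/(((P 1+a)/a)^2)"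
      unfolding h1 h2 using a by simp
    also have "\<dots> = n 1*P 1*a*(P 1+2*a)/(P 1+a)^2"
    proof -
      have s: "P 1 + a \<noteq> 0" "a \<noteq> 0" using a P1 by auto
      show ?thesis using s by (simp add: power_divide field_simps) (simp add: power2_eq_square algebra_simps)
    qed
    finally show ?thesis .
  qed
  show ?thesis unfolding eps_def s1 s2 e ..
qed

theorem lemma3:
  fixes B :: real and M :: nat and n P :: "nat \<Rightarrow> real" and I :: "real set"
  assumes "B > 0" and "M \<ge> 2"
    and "\<forall>i\<in>{1..M}. n i > 0 \<and> P i > 0"
    and "is_interval I" and "I \<subseteq> {0<..}"
    and "\<forall>a\<in>I. inB B M (n(1 := a * n 1)) (P(1 := P 1 / a))"
  shows "(\<forall>a\<in>I. \<forall>b\<in>I. a \<le> b \<longrightarrow>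
           eps B 1 (n(1 := b * n 1)) (P(1 := P 1 / b)) \<le> eps B 1 (n(1 := a * n 1)) (P(1 := P 1 / a))) \<and>
         (\<forall>a\<in>I. \<forall>b\<in>I. a \<le> b \<longrightarrow>
           eps B M (n(1 := b * n 1)) (P(1 := P 1 / b)) \<le> eps B M (n(1 := a * n 1)) (P(1 := P 1 / a)))"
proof -
  note B = assms(1) and M2 = assms(2) and pos = assms(3) and I = assms(4,5) and hB = assms(6)
  define \<beta> where "\<beta> = B * ln 2"
  have b0: "\<beta> > 0" using B by (simp add: \<beta>_def)
  have n1: "n 1 > 0" and P1: "P 1 > 0" using pos M2 by auto
  define RS where "RS m = (\<Sum>i=2..m. n i * ln (1 + P i))" for m :: nat
  define RV where "RV m = (\<Sum>i=2..m. n i * P i * (P i + 2) / (P i + 1) ^ 2)" for m :: nat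
  define F where "F m t = (t*n 1*ln(1+P 1/t) + RS m - \<beta>) / sqrt (n 1*P 1*t*(P 1+2*t)/(P 1+t)^2 + RV m)" for m t
  have epsF: "eps B m (n(1 := t * n 1)) (P(1 := P 1 / t)) = Qfun (F m t)" if "1 \<le> m" "t > 0" for m t
    using eps_split[where B=B and a=t and m=m and n=n and P=P, OF that P1] by (simp add: F_def RS_def RV_def \<beta>_def)
  have RV0: "RV m \<ge> 0" if "m \<le> M" for m
    unfolding RV_def
  proof (intro sum_nonneg)
    fix i assume "i \<in> {2..m}"
    then have "i \<in> {1..M}" using that by auto
    then have "0 < n i" "0 < P i" using pos by auto
    then show "0 \<le> n i * P i * (P i + 2) / (P i + 1) ^ 2"
      by (intro divide_nonneg_nonneg mult_nonneg_nonneg) auto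
  qed
  have RS1: "RS 1 = 0" and RV1: "RV 1 = 0" by (simp_all add: RS_def RV_def)
  have cc: "sqrt (2 * B * ln 2) / 3 = sqrt (2*\<beta>)/3" by (simp add: \<beta>_def mult.assoc)
  have cond: "\<beta> < t*n 1*ln(1+P 1/t) \<and> F 1 t < sqrt(2*\<beta>)/3 \<and> F M t < sqrt(2*\<beta>)/3" if tI: "t \<in> I" for t
  proof -
    have t0: "t > 0" using tI I by auto
    have h: "inB B M (n(1 := t * n 1)) (P(1 := P 1 / t))" using hB tI by blast
    have e1: "Qfun (F 1 t) < 1/2" and e2: "Qfun (F M t) < Qfun (F 1 t)"
      and e3: "Qfun (sqrt(2*\<beta>)/3) < Qfun (F M t)"
    proof -
      have q1: "eps B 1 (n(1 := t*n 1)) (P(1 := P 1/t)) = Qfun (F 1 t)" using t0 by (intro epsF) auto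
      have qM: "eps B M (n(1 := t*n 1)) (P(1 := P 1/t)) = Qfun (F M t)" using t0 M2 by (intro epsF) auto
      have "0.5 > Qfun (F 1 t) \<and> Qfun (F 1 t) > Qfun (F M t) \<and> Qfun (F M t) > Qfun (sqrt(2*\<beta>)/3)"
        using h unfolding inB_def q1 qM cc by blast
      then show "Qfun (F 1 t) < 1/2" "Qfun (F M t) < Qfun (F 1 t)" "Qfun (sqrt(2*\<beta>)/3) < Qfun (F M t)"
        by simp_all
    qed
    have F1pos: "F 1 t > 0"
    proof (rule ccontr)
      assume "\<not> F 1 t > 0"
      then have "Qfun 0 \<le> Qfun (F 1 t)" by (intro Qfun_antimono) simp
      then show False using e1 Qfun_0 by linarith
    qed
    have FM: "F M t < sqrt(2*\<beta>)/3"
    proof (rule ccontr)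
      assume "\<not> F M t < sqrt(2*\<beta>)/3"
      then have "Qfun (F M t) \<le> Qfun (sqrt(2*\<beta>)/3)" by (intro Qfun_antimono) simp
      then show False using e3 by linarith
    qed
    have F1M: "F 1 t < F M t"
    proof (rule ccontr)
      assume "\<not> F 1 t < F M t"
      then have "Qfun (F 1 t) \<le> Qfun (F M t)" by (intro Qfun_antimono) simp
      then show False using e2 by linarith
    qed
    have "0 < t*n 1*ln(1+P 1/t) - \<beta>"
    proof -
      have "0 < (t*n 1*ln(1+P 1/t) - \<beta>) / sqrt (n 1*P 1*t*(P 1+2*t)/(P 1+t)^2)"
        using F1pos unfolding F_def RS1 RV1 by simp
      moreover have "0 < sqrt (n 1*P 1*t*(P 1+2*t)/(P 1+t)^2)" using n1 P1 t0 by simp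
      ultimately have "0 < ((t*n 1*ln(1+P 1/t) - \<beta>) / sqrt (n 1*P 1*t*(P 1+2*t)/(P 1+t)^2)) * sqrt (n 1*P 1*t*(P 1+2*t)/(P 1+t)^2)"
        by (rule mult_pos_pos)
      moreover have "sqrt (n 1*P 1*t*(P 1+2*t)/(P 1+t)^2) \<noteq> 0" using n1 P1 t0 by simp
      ultimately show ?thesis by simp
    qed
    then show ?thesis using FM F1M by simp
  qed
  have mono: "F m a \<le> F m b" if m: "m = 1 \<or> m = M" and ab: "a \<in> I" "b \<in> I" "a \<le> b" for m a b
  proof -
    have "m \<le> M" using m M2 by auto
    then have RVm: "RV m \<ge> 0" by (rule RV0)
    show ?thesis unfolding F_def
      by (rule F_mono[OF n1 P1 b0 RVm I _ ab]) (use cond m in \<open>auto simp: F_def\<close>)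
  qed
  show ?thesis
  proof (intro conjI ballI impI)
    fix a b assume ab: "a \<in> I" "b \<in> I" "a \<le> b"
    have a0: "a > 0" and bb0: "b > 0" using ab I by auto
    have m1: "1 \<le> (1::nat)" and mM: "1 \<le> M" using M2 by auto
    show "eps B 1 (n(1 := b * n 1)) (P(1 := P 1 / b)) \<le> eps B 1 (n(1 := a * n 1)) (P(1 := P 1 / a))"
      unfolding epsF[OF m1 a0] epsF[OF m1 bb0] using mono[of 1 a b] ab by (intro Qfun_antimono) auto
    show "eps B M (n(1 := b * n 1)) (P(1 := P 1 / b)) \<le> eps B M (n(1 := a * n 1)) (P(1 := P 1 / a))"
      unfolding epsF[OF mM a0] epsF[OF mM bb0] using mono[of M a b] ab by (intro Qfun_antimono) auto
  qed
qed

end
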